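(* Let $\Delta$ be a simplicial forest. Then the greatest common divisor of the maximal minors of the incidence matrix of $\Delta$ is $1$.
   Context: A simplicial complex $\Delta$ is a collection of subsets (faces) of a finite vertex set closed under taking subsets; facets are maximal faces; write $\Delta=\langle F_1,\dots,F_s\rangle$ when $F_1,\dots,F_s$ are the facets. The incidence matrix of $\Delta=\langle F_1,\dots,F_s\rangle$ with vertices $v_1,\dots,v_n$ is the $s\times n$ matrix whose $(i,j)$ entry is $1$ if $v_j\in F_i$ and $0$ otherwise. A facet $F$ of $\Delta$ is a leaf if either $F$ is the only facet of $\Delta$, or there is a facet $G\neq F$ of $\Delta$ with $F\cap F'\subseteq F\cap G$ for every facet $F'\neq F$ of $\Delta$. $\Delta$ is a simplicial tree if $\Delta$ is connected and every subcomplex $\langle F_{i_1},\dots,F_{i_r}\rangle$ generated by a nonempty subset of the facets has a leaf; $\Delta$ is a simplicial forest if every connected component of $\Delta$ is a simplicial tree. *)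

theory Defs
  imports Main "Jordan_Normal_Form.Determinant" "Jordan_Normal_Form.DL_Submatrix"
begin

definition simplicial_complex :: "'a set set \<Rightarrow> bool" where
  "simplicial_complex \<Delta> \<longleftrightarrow> finite (\<Union>\<Delta>) \<and> (\<forall>F\<in>\<Delta>. \<forall>G. G \<subseteq> F \<longrightarrow> G \<in> \<Delta>)"

definition vertices :: "'a set set \<Rightarrow> 'a set" where
  "vertices \<Delta> = \<Union>\<Delta>"

definition facets :: "'a set set \<Rightarrow> 'a set set" where
  "facets \<Delta> = {F \<in> \<Delta>. \<forall>G\<in>\<Delta>. F \<subseteq> G \<longrightarrow> G = F}"

definition is_leaf :: "'a set set \<Rightarrow> 'a set \<Rightarrow> bool" where
  "is_leaf \<F> F \<longleftrightarrow> F \<in> \<F> \<and>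
     (\<F> = {F} \<or> (\<exists>G\<in>\<F>. G \<noteq> F \<and> (\<forall>F'\<in>\<F>. F' \<noteq> F \<longrightarrow> F \<inter> F' \<subseteq> F \<inter> G)))"

text \<open>Two facets are adjacent if they share a vertex; connectivity of the complex generated
  by a facet set is connectivity of this relation (a chain of pairwise intersecting facets).\<close>
definition facet_adj :: "'a set set \<Rightarrow> ('a set \<times> 'a set) set" where
  "facet_adj \<F> = {(F, G). F \<in> \<F> \<and> G \<in> \<F> \<and> F \<inter> G \<noteq> {}}"

definition connected_facets :: "'a set set \<Rightarrow> bool" where
  "connected_facets \<F> \<longleftrightarrow> (\<forall>F\<in>\<F>. \<forall>G\<in>\<F>. (F, G) \<in> (facet_adj \<F>)\<^sup>*)"

definition components :: "'a set set \<Rightarrow> 'a set set set" where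
  "components \<F> = {{G \<in> \<F>. (F, G) \<in> (facet_adj \<F>)\<^sup>*} | F. F \<in> \<F>}"

definition simplicial_tree_facets :: "'a set set \<Rightarrow> bool" where
  "simplicial_tree_facets \<F> \<longleftrightarrow> connected_facets \<F> \<and>
     (\<forall>\<G>. \<G> \<subseteq> \<F> \<and> \<G> \<noteq> {} \<longrightarrow> (\<exists>F. is_leaf \<G> F))"

definition simplicial_forest :: "'a set set \<Rightarrow> bool" where
  "simplicial_forest \<Delta> \<longleftrightarrow> (\<forall>C \<in> components (facets \<Delta>). simplicial_tree_facets C)"

definition incidence_matrix :: "'a set list \<Rightarrow> 'a list \<Rightarrow> int mat" where
  "incidence_matrix Fs vs =
     mat (length Fs) (length vs) (\<lambda>(i, j). if vs ! j \<in> Fs ! i then 1 else 0)"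

definition maximal_minors :: "int mat \<Rightarrow> int set" where
  "maximal_minors A =
     {det (submatrix A I J) | I J. I \<subseteq> {0..<dim_row A} \<and> J \<subseteq> {0..<dim_col A} \<and>
        card I = min (dim_row A) (dim_col A) \<and> card J = min (dim_row A) (dim_col A)}"

end

theory Submission
  imports Defs
begin

lemma free_sdr:
  fixes G :: "'b set" and mem :: "'c \<Rightarrow> 'b \<Rightarrow> bool"
  assumes "finite G"
  shows "(\<forall>R\<subseteq>G. R \<noteq> {} \<longrightarrow> (\<exists>x\<in>R. \<exists>v. mem v x \<and> (\<forall>y\<in>R. y \<noteq> x \<longrightarrow> \<not> mem v y))) \<longrightarrow>
    (\<exists>\<sigma>. inj_on \<sigma> G \<and> (\<forall>x\<in>G. mem (\<sigma> x) x) \<and>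
      (\<forall>p. bij_betw p G (\<sigma> ` G) \<and> (\<forall>x\<in>G. mem (p x) x) \<longrightarrow> (\<forall>x\<in>G. p x = \<sigma> x)))"
  using assms
proof (induction G rule: finite_remove_induct)
  case empty
  then show ?case by auto
next
  case (remove A)
  show ?case
  proof
    assume H: "\<forall>R\<subseteq>A. R \<noteq> {} \<longrightarrow> (\<exists>x\<in>R. \<exists>v. mem v x \<and> (\<forall>y\<in>R. y \<noteq> x \<longrightarrow> \<not> mem v y))"
    then obtain x0 v where x0: "x0 \<in> A" "mem v x0" and fr: "\<forall>y\<in>A. y \<noteq> x0 \<longrightarrow> \<not> mem v y"
      using remove.hyps(2) by blast
    have "\<forall>R\<subseteq>A - {x0}. R \<noteq> {} \<longrightarrow> (\<exists>x\<in>R. \<exists>v. mem v x \<and> (\<forall>y\<in>R. y \<noteq> x \<longrightarrow> \<not> mem v y))"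
      using H by blast
    with remove.IH[OF x0(1)] obtain \<sigma> where
      s1: "inj_on \<sigma> (A - {x0})" and s2: "\<forall>x\<in>A - {x0}. mem (\<sigma> x) x" and
      s3: "\<forall>p. bij_betw p (A - {x0}) (\<sigma> ` (A - {x0})) \<and> (\<forall>x\<in>A - {x0}. mem (p x) x) \<longrightarrow> (\<forall>x\<in>A - {x0}. p x = \<sigma> x)"
      by blast
    define \<tau> where "\<tau> = \<sigma>(x0 := v)"
    have vnot: "v \<notin> \<sigma> ` (A - {x0})" using s2 fr by auto
    have imgA: "\<tau> ` A = insert v (\<sigma> ` (A - {x0}))"
      using x0 unfolding \<tau>_def by auto
    have img': "\<tau> ` (A - {x0}) = \<sigma> ` (A - {x0})" unfolding \<tau>_def by auto
    have t1: "inj_on \<tau> A"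
    proof -
      have "inj_on \<tau> (A - {x0})" using s1 unfolding \<tau>_def inj_on_def by auto
      moreover have "\<tau> x0 \<notin> \<tau> ` (A - {x0})" using vnot img' unfolding \<tau>_def by auto
      ultimately show ?thesis unfolding inj_on_def by (metis Diff_iff imageI singletonD)
    qed
    have t2: "\<forall>x\<in>A. mem (\<tau> x) x" using s2 x0 unfolding \<tau>_def by auto
    have t3: "\<forall>x\<in>A. p x = \<tau> x" if p1: "bij_betw p A (\<tau> ` A)" and p2: "\<forall>x\<in>A. mem (p x) x" for p
    proof -
      have "v \<in> \<tau> ` A" using imgA by auto
      then obtain y where y: "y \<in> A" "p y = v" using p1 unfolding bij_betw_def by (metis imageE)
      then have "y = x0" using p2 fr by force
      with y have px0: "p x0 = v" by simp
      have "bij_betw p {x0} {v}" using px0 by (simp add: bij_betw_def)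
      then have "bij_betw p (A - {x0}) (\<tau> ` A - {v})"
        using bij_betw_DiffI[OF p1] x0 imgA by blast
      moreover have "\<tau> ` A - {v} = \<sigma> ` (A - {x0})" using imgA vnot by auto
      ultimately have "\<forall>x\<in>A - {x0}. p x = \<sigma> x" using s3 p2 by auto
      then show ?thesis using px0 unfolding \<tau>_def by auto
    qed
    show "\<exists>\<sigma>. inj_on \<sigma> A \<and> (\<forall>x\<in>A. mem (\<sigma> x) x) \<and>
      (\<forall>p. bij_betw p A (\<sigma> ` A) \<and> (\<forall>x\<in>A. mem (p x) x) \<longrightarrow> (\<forall>x\<in>A. p x = \<sigma> x))"
      using t1 t2 t3 by blast
  qed
qed

lemma forest_free:
  assumes "simplicial_forest \<Delta>"
    and "R \<subseteq> facets \<Delta>" "R \<noteq> {}" "\<forall>F\<in>facets \<Delta>. F \<noteq> {}"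
  shows "\<exists>F\<in>R. \<exists>v. v \<in> F \<and> (\<forall>F'\<in>R. F' \<noteq> F \<longrightarrow> v \<notin> F')"
proof -
  let ?FF = "facets \<Delta>"
  obtain F0 where F0: "F0 \<in> R" using assms(3) by blast
  define C where "C = {G \<in> ?FF. (F0, G) \<in> (facet_adj ?FF)\<^sup>*}"
  have "C \<in> components ?FF" unfolding components_def C_def using F0 assms(2) by blast
  then have tree: "simplicial_tree_facets C" using assms(1) unfolding simplicial_forest_def by blast
  have F0C: "F0 \<in> C" using F0 assms(2) unfolding C_def by auto
  have closed: "F' \<in> C" if "F \<in> C" "F' \<in> R" "v \<in> F" "v \<in> F'" for F F' v
  proof -
    have "(F, F') \<in> facet_adj ?FF" using that assms(2) unfolding facet_adj_def C_def by auto
    moreover have "(F0, F) \<in> (facet_adj ?FF)\<^sup>*" using that unfolding C_def by auto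
    ultimately have "(F0, F') \<in> (facet_adj ?FF)\<^sup>*" by (meson rtrancl_into_rtrancl)
    then show ?thesis using that assms(2) unfolding C_def by auto
  qed
  have "R \<inter> C \<subseteq> C" "R \<inter> C \<noteq> {}" using F0 F0C by auto
  then obtain F where leaf: "is_leaf (R \<inter> C) F" using tree unfolding simplicial_tree_facets_def by blast
  then have FRC: "F \<in> R" "F \<in> C" unfolding is_leaf_def by auto
  have Ffac: "F \<in> ?FF" using FRC assms(2) by auto
  from leaf consider "R \<inter> C = {F}" | G where "G \<in> R \<inter> C" "G \<noteq> F"
      "\<forall>F'\<in>R \<inter> C. F' \<noteq> F \<longrightarrow> F \<inter> F' \<subseteq> F \<inter> G"
    unfolding is_leaf_def by blast
  then show ?thesis
  proof cases
    case 1
    obtain v where v: "v \<in> F" using Ffac assms(4) by blast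
    have "\<forall>F'\<in>R. F' \<noteq> F \<longrightarrow> v \<notin> F'"
      using closed[OF FRC(2) _ v] 1 by blast
    then show ?thesis using FRC v by blast
  next
    case (2 G)
    have Gfac: "G \<in> ?FF" using 2 assms(2) by auto
    have "\<not> F \<subseteq> G"
    proof
      assume "F \<subseteq> G"
      then have "G = F" using Ffac Gfac unfolding facets_def by blast
      then show False using 2 by simp
    qed
    then obtain v where v: "v \<in> F" "v \<notin> G" by blast
    have "\<forall>F'\<in>R. F' \<noteq> F \<longrightarrow> v \<notin> F'"
    proof (intro ballI impI notI)
      fix F' assume "F' \<in> R" "F' \<noteq> F" "v \<in> F'"
      then have "F' \<in> C" using closed[OF FRC(2) _ v(1)] by blast
      then have "F \<inter> F' \<subseteq> F \<inter> G" using 2 \<open>F' \<in> R\<close> \<open>F' \<noteq> F\<close> by blast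
      then show False using v \<open>v \<in> F'\<close> by blast
    qed
    then show ?thesis using FRC v by blast
  qed
qed


lemma pick_atLeast0: assumes "a < s" shows "pick {0..<s} a = a"
proof -
  have c: "a < card {0..<s}" using assms by simp
  have "pick {0..<s} a \<in> {0..<s}" using pick_in_set c by blast
  moreover have "card {x\<in>{0..<s}. x < pick {0..<s} a} = a" using card_pick c by blast
  moreover have "{x\<in>{0..<s}. x < pick {0..<s} a} = {0..<pick {0..<s} a}"
    using \<open>pick {0..<s} a \<in> {0..<s}\<close> by auto
  ultimately have "card {0..<pick {0..<s} a} = a" by simp
  then show ?thesis by simp
qed

lemma gcd_unit_int: assumes "(x::int) \<in> S" "\<bar>x\<bar> = 1" shows "Gcd S = 1"
proof -
  have "Gcd S dvd x" using assms(1) by (rule Gcd_dvd)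
  moreover have "x dvd 1" using assms(2) by simp
  ultimately have "Gcd S dvd 1" by (rule dvd_trans)
  then have "\<bar>Gcd S\<bar> = 1" by simp
  then show ?thesis using Gcd_int_greater_eq_0[of S] by linarith
qed

lemma det_unique_perm:
  fixes M :: "int mat"
  assumes "M \<in> carrier_mat s s" "p0 permutes {0..<s}" "\<forall>i<s. M $$ (i, p0 i) = 1"
    "\<forall>p. p permutes {0..<s} \<and> p \<noteq> p0 \<longrightarrow> (\<exists>i<s. M $$ (i, p i) = 0)"
  shows "det M = signof p0"
proof -
  let ?g = "\<lambda>p. signof p * (\<Prod>i = 0..<s. M $$ (i, p i))"
  have fin: "finite {p. p permutes {0..<s}}" by (simp add: finite_permutations)
  have "det M = (\<Sum>p\<in>{p. p permutes {0..<s}}. ?g p)" using det_def'[OF assms(1)] by simp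
  also have "\<dots> = ?g p0 + (\<Sum>p\<in>{p. p permutes {0..<s}} - {p0}. ?g p)"
    using sum.remove[OF fin, of p0] assms(2) by simp
  also have "(\<Sum>p\<in>{p. p permutes {0..<s}} - {p0}. ?g p) = 0"
  proof (rule sum.neutral, rule ballI)
    fix p assume "p \<in> {p. p permutes {0..<s}} - {p0}"
    then obtain i where "i < s" "M $$ (i, p i) = 0" using assms(4) by auto
    then have "(\<Prod>i = 0..<s. M $$ (i, p i)) = 0" by (metis atLeastLessThan_iff finite_atLeastLessThan prod_zero zero_le)
    then show "?g p = 0" by simp
  qed
  also have "(\<Prod>i = 0..<s. M $$ (i, p0 i)) = 1" using assms(3) by simp
  finally show ?thesis by simp
qed


lemma sub00: "submatrix (A::int mat) {} {} \<in> carrier_mat 0 0"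
  by (rule carrier_matI) (simp_all add: dim_submatrix)

lemma det0: assumes "(M::int mat) \<in> carrier_mat 0 0" shows "det M = 1"
proof -
  have "M = 1\<^sub>m 0" using assms by (intro eq_matI) auto
  then show ?thesis by simp
qed

theorem proposition2p6:
  fixes \<Delta> :: "'a set set" and Fs :: "'a set list" and vs :: "'a list"
  assumes "simplicial_complex \<Delta>"
    and "simplicial_forest \<Delta>"
    and "distinct Fs" and "set Fs = facets \<Delta>"
    and "distinct vs" and "set vs = vertices \<Delta>"
  shows "Gcd (maximal_minors (incidence_matrix Fs vs)) = 1"
proof -
  let ?A = "incidence_matrix Fs vs"
  define s where "s = length Fs"
  define n where "n = length vs"
  have dims: "dim_row ?A = s" "dim_col ?A = n"
    unfolding incidence_matrix_def s_def n_def by simp_all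
  have entry: "?A $$ (i, j) = (if vs ! j \<in> Fs ! i then 1 else 0)" if "i < s" "j < n" for i j
    using that unfolding incidence_matrix_def s_def n_def by simp
  have facD: "G \<in> \<Delta>" if "G \<in> facets \<Delta>" for G using that unfolding facets_def by auto
  show ?thesis
  proof (cases "\<forall>F\<in>set Fs. F \<noteq> {}")
    case False
    then have "{} \<in> facets \<Delta>" using assms(4) by auto
    then have "\<forall>G\<in>\<Delta>. G = {}" unfolding facets_def by blast
    then have "vertices \<Delta> = {}" unfolding vertices_def by auto
    then have "set vs = {}" using assms(6) by simp
    then have "vs = []" by simp
    have "n = 0" using \<open>vs = []\<close> n_def by (metis list.size(3))
    let ?M = "submatrix ?A {} {}"
    have "?M \<in> carrier_mat 0 0" by (rule sub00)
    then have "det ?M = 1" by (rule det0)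
    moreover have "\<exists>I J. det ?M = det (submatrix ?A I J) \<and> I \<subseteq> {0..<dim_row ?A} \<and> J \<subseteq> {0..<dim_col ?A} \<and>
        card I = min (dim_row ?A) (dim_col ?A) \<and> card J = min (dim_row ?A) (dim_col ?A)"
      by (rule exI[of _ "{}"], rule exI[of _ "{}"]) (simp add: dims \<open>n = 0\<close>)
    then have "det ?M \<in> maximal_minors ?A"
      unfolding maximal_minors_def by blast
    ultimately show ?thesis using gcd_unit_int by (metis abs_one)
  next
    case True
    have ne: "\<forall>F\<in>facets \<Delta>. F \<noteq> {}" using True assms(4) by simp
    have her: "\<forall>R\<subseteq>{0..<s}. R \<noteq> {} \<longrightarrow> (\<exists>a\<in>R. \<exists>v. v \<in> Fs ! a \<and> (\<forall>b\<in>R. b \<noteq> a \<longrightarrow> v \<notin> Fs ! b))"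
    proof (intro allI impI)
      fix R assume R: "R \<subseteq> {0..<s}" "R \<noteq> {}"
      let ?R = "(\<lambda>a. Fs ! a) ` R"
      have "?R \<subseteq> facets \<Delta>"
      proof
        fix F assume "F \<in> ?R"
        then obtain a where "a \<in> R" "F = Fs ! a" by blast
        then have "a < length Fs" using R unfolding s_def by auto
        then show "F \<in> facets \<Delta>" using \<open>F = Fs ! a\<close> assms(4) nth_mem by blast
      qed
      moreover have "?R \<noteq> {}" using R by simp
      ultimately have "\<exists>F\<in>?R. \<exists>v. v \<in> F \<and> (\<forall>F'\<in>?R. F' \<noteq> F \<longrightarrow> v \<notin> F')"
        by (rule forest_free[OF assms(2) _ _ ne])
      then obtain F v where Fv: "F \<in> ?R" "v \<in> F" "\<forall>F'\<in>?R. F' \<noteq> F \<longrightarrow> v \<notin> F'"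
        by blast
      from Fv(1) obtain a where a: "a \<in> R" "F = Fs ! a" by (rule imageE) simp
      have "\<forall>b\<in>R. b \<noteq> a \<longrightarrow> v \<notin> Fs ! b"
      proof (intro ballI impI)
        fix b assume b: "b \<in> R" "b \<noteq> a"
        have ab: "b < length Fs" "a < length Fs" using b a R unfolding s_def by auto
        have "Fs ! b \<noteq> Fs ! a" using nth_eq_iff_index_eq[OF assms(3) ab] b(2) by simp
        then show "v \<notin> Fs ! b" using Fv a b by blast
      qed
      then show "\<exists>a\<in>R. \<exists>v. v \<in> Fs ! a \<and> (\<forall>b\<in>R. b \<noteq> a \<longrightarrow> v \<notin> Fs ! b)" using a Fv by blast
    qed
    obtain \<sigma> where s1: "inj_on \<sigma> {0..<s}" and s2: "\<forall>x\<in>{0..<s}. \<sigma> x \<in> Fs ! x" and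
      s3: "\<forall>p. bij_betw p {0..<s} (\<sigma> ` {0..<s}) \<and> (\<forall>x\<in>{0..<s}. p x \<in> Fs ! x) \<longrightarrow> (\<forall>x\<in>{0..<s}. p x = \<sigma> x)"
      using free_sdr[of "{0..<s}" "\<lambda>v a. v \<in> Fs ! a"] her by auto
    have sV: "\<sigma> a \<in> set vs" if "a < s" for a
    proof -
      have "Fs ! a \<in> set Fs" using that unfolding s_def by simp
      then have "Fs ! a \<in> \<Delta>" using facD assms(4) by blast
      then show ?thesis using s2 that assms(6) unfolding vertices_def by auto
    qed
    define S where "S = \<sigma> ` {0..<s}"
    have cardS: "card S = s" unfolding S_def using card_image[OF s1] by simp
    define J where "J = {j. j < n \<and> vs ! j \<in> S}"
    have bijJ: "bij_betw (\<lambda>j. vs ! j) J S"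
    proof -
      have "inj_on (\<lambda>j. vs ! j) J" using assms(5) unfolding inj_on_def J_def n_def
        by (simp add: nth_eq_iff_index_eq)
      moreover have "(\<lambda>j. vs ! j) ` J = S"
      proof
        show "(\<lambda>j. vs ! j) ` J \<subseteq> S" unfolding J_def by auto
        show "S \<subseteq> (\<lambda>j. vs ! j) ` J"
        proof
          fix x assume "x \<in> S"
          then have "x \<in> set vs" using sV unfolding S_def by auto
          then obtain j where "j < n" "vs ! j = x" unfolding n_def by (metis in_set_conv_nth)
          then show "x \<in> (\<lambda>j. vs ! j) ` J" using \<open>x \<in> S\<close> unfolding J_def by auto
        qed
      qed
      ultimately show ?thesis unfolding bij_betw_def by blast
    qed
    have cardJ: "card J = s" using bij_betw_same_card[OF bijJ] cardS by simp
    have Jsub: "J \<subseteq> {0..<n}" unfolding J_def by auto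
    then have "s \<le> n" using cardJ by (metis card_atLeastLessThan card_mono finite_atLeastLessThan diff_zero)
    define M where "M = submatrix ?A {0..<s} J"
    have rowset: "{i. i < dim_row ?A \<and> i \<in> {0..<s}} = {0..<s}" using dims by auto
    have colset: "{j. j < dim_col ?A \<and> j \<in> J} = J" using dims Jsub by auto
    have Mcar: "M \<in> carrier_mat s s"
    proof (rule carrier_matI)
      show "dim_row M = s" unfolding M_def using dim_submatrix(1)[of ?A "{0..<s}" J] rowset by simp
      show "dim_col M = s" unfolding M_def using dim_submatrix(2)[of ?A "{0..<s}" J] colset cardJ by simp
    qed
    define f where "f = (\<lambda>b. vs ! (pick J b))"
    have pickJ: "pick J b \<in> J" if "b < s" for b using pick_in_set cardJ that by metis
    have entryM: "M $$ (a, b) = (if f b \<in> Fs ! a then 1 else 0)" if "a < s" "b < s" for a b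
    proof -
      have "M $$ (a, b) = ?A $$ (pick {0..<s} a, pick J b)"
        unfolding M_def using submatrix_index[of a ?A "{0..<s}" b J] rowset colset cardJ that by simp
      also have "\<dots> = ?A $$ (a, pick J b)" using pick_atLeast0 that by simp
      also have "\<dots> = (if f b \<in> Fs ! a then 1 else 0)"
        using entry[of a "pick J b"] pickJ[OF that(2)] that unfolding f_def J_def by auto
      finally show ?thesis .
    qed
    have injf: "inj_on f {0..<s}"
    proof (rule inj_onI)
      fix a b assume ab: "a \<in> {0..<s}" "b \<in> {0..<s}" "f a = f b"
      have "pick J a = pick J b"
        using bijJ pickJ ab unfolding f_def bij_betw_def inj_on_def by auto
      then show "a = b" using pick_mono[of b J a] pick_mono[of a J b] cardJ ab
        by (metis atLeastLessThan_iff less_irrefl linorder_neqE_nat)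
    qed
    have bijf: "bij_betw f {0..<s} S"
    proof -
      have sub: "f ` {0..<s} \<subseteq> S" using pickJ unfolding f_def J_def by auto
      have "card (f ` {0..<s}) = card S" using card_image[OF injf] cardS by simp
      then have "f ` {0..<s} = S" using sub card_subset_eq[of S] unfolding S_def by blast
      then show ?thesis using injf unfolding bij_betw_def by blast
    qed
    define p0 where "p0 = (\<lambda>x. if x < s then the_inv_into {0..<s} f (\<sigma> x) else x)"
    have bs: "bij_betw \<sigma> {0..<s} S" using s1 unfolding S_def by (rule inj_on_imp_bij_betw)
    have "bij_betw (the_inv_into {0..<s} f \<circ> \<sigma>) {0..<s} {0..<s}"
      using bij_betw_trans[OF bs bij_betw_the_inv_into[OF bijf]] .
    then have "bij_betw p0 {0..<s} {0..<s}"
      by (rule bij_betw_cong[THEN iffD1, rotated]) (simp add: p0_def)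
    then have p0perm: "p0 permutes {0..<s}" by (rule bij_imp_permutes) (simp add: p0_def)
    have fp0: "f (p0 x) = \<sigma> x" if "x < s" for x
      using f_the_inv_into_f_bij_betw[OF bijf] that unfolding p0_def S_def by auto
    have p0lt: "p0 x < s" if "x < s" for x using p0perm that by (simp add: permutes_in_image)
    have c3: "\<forall>i<s. M $$ (i, p0 i) = 1"
      using entryM p0lt fp0 s2 by simp
    have c4: "\<forall>p. p permutes {0..<s} \<and> p \<noteq> p0 \<longrightarrow> (\<exists>i<s. M $$ (i, p i) = 0)"
    proof (intro allI impI, elim conjE)
      fix p assume pp: "p permutes {0..<s}" "p \<noteq> p0"
      show "\<exists>i<s. M $$ (i, p i) = 0"
      proof (rule ccontr)
        assume "\<not> ?thesis"
        then have mem: "\<forall>i\<in>{0..<s}. (f \<circ> p) i \<in> Fs ! i"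
          using entryM pp(1) by (auto simp: permutes_in_image split: if_splits)
        have "bij_betw (f \<circ> p) {0..<s} S"
          using bij_betw_trans[OF permutes_imp_bij[OF pp(1)] bijf] .
        then have "\<forall>x\<in>{0..<s}. (f \<circ> p) x = \<sigma> x" using s3 mem unfolding S_def by blast
        then have "\<forall>x\<in>{0..<s}. p x = p0 x"
          using fp0 injf p0lt pp(1) unfolding inj_on_def
          by (auto simp: permutes_in_image)
        moreover have "\<forall>x. x \<notin> {0..<s} \<longrightarrow> p x = p0 x"
          using pp(1) unfolding p0_def permutes_def by auto
        ultimately have "p = p0" by blast
        then show False using pp(2) by simp
      qed
    qed
    have detM: "det M = signof p0" using det_unique_perm[OF Mcar p0perm c3 c4] .
    have "\<bar>det M\<bar> = 1" using detM by (simp add: sign_def)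
    moreover have "det M \<in> maximal_minors ?A"
    proof -
      have mn: "min (dim_row ?A) (dim_col ?A) = s" using dims \<open>s \<le> n\<close> by simp
      have "\<exists>I J. det M = det (submatrix ?A I J) \<and> I \<subseteq> {0..<dim_row ?A} \<and> J \<subseteq> {0..<dim_col ?A} \<and>
        card I = min (dim_row ?A) (dim_col ?A) \<and> card J = min (dim_row ?A) (dim_col ?A)"
        by (rule exI[of _ "{0..<s}"], rule exI[of _ J]) (simp add: M_def dims Jsub cardJ \<open>s \<le> n\<close>)
      then show ?thesis unfolding maximal_minors_def by blast
    qed
    ultimately show ?thesis using gcd_unit_int by blast
  qed
qed

end
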